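(* Let $X$ be a real Banach space, $f\in\Gamma_0(X)$, $S_f\ne\emptyset$. Then $$\inf\{\varepsilon>0\mid \mathrm{Er}\{\mathrm{Ptb}^w(f,\varepsilon)\}=0\}\le\inf\{\varepsilon>0\mid \mathrm{Er}\{\mathrm{Ptb}^w_l(f,\varepsilon)\}=0\}\le|\partial f|_{\rm bd}$$ and $$|\partial f|_{\rm bd}\le\inf\{\varepsilon>0\mid \mathrm{Er}\{\mathrm{Ptb}(f,\varepsilon)\}=0\}\le\inf\{\varepsilon>0\mid \mathrm{Er}\{\mathrm{Ptb}_l(f,\varepsilon)\}=0\}.$$
   Context: $X^*$ is the dual, $\mathbb{B}^*$ its closed unit ball. $\Gamma_0(X)$: proper convex lsc extended-real-valued functions on $X$. For convex $f$, $\partial f(x):=\{x^*\in X^*\mid \langle x^*,u-x\rangle\le f(u)-f(x)\ \forall u\in X\}$. $d(x,S)=\inf_{u\in S}\|u-x\|$, $d(x,\emptyset)=+\infty$, $\inf\emptyset=+\infty$. $S_f:=\{x\mid f(x)\le0\}$, $S_f^=:=\{x\mid f(x)=0\}$. Global error bound modulus: $\mathrm{Er}\,f:=\inf_{f(x)>0}\frac{f(x)}{d(x,S_f)}$. $|\partial f|_{\rm bd}:=\inf_{f(x)=0} d(0,\mathrm{bd}\,\partial f(x))$ (boundary in norm topology of $X^*$). For $x\in S_f^=$, $\varepsilon,\delta\ge0$: $\tau(f,x,\varepsilon,\delta):=\inf_{u:\,f(u)\ge-\varepsilon\|u-x\|-\delta} d(0,\partial f(u))$ if $0\notin\mathrm{int}\,\partial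 f(x)$, and $:=d(0,\mathrm{bd}\,\partial f(x))$ if $0\in\mathrm{int}\,\partial f(x)$. For $\varepsilon\ge0$: $g$ is an $\varepsilon$-perturbation of $f$ ($g\in\mathrm{Ptb}(f,\varepsilon)$) if $S_g\ne\emptyset$, $g=f+p$ with $p:X\to\mathbb{R}$ convex, and there exist $x\in S_f^=$ and $\xi\ge0$ such that $\xi+|\partial f|_{\rm bd}-\tau(f,x,\xi,|p(x)|)\le\varepsilon$ and $|p(u)-p(x)|\le\xi\|u-x\|$ for all $u\in X$. $g$ is a weak $\varepsilon$-perturbation ($g\in\mathrm{Ptb}^w(f,\varepsilon)$) if $S_g\ne\emptyset$, $g=f+p$ with $p:X\to\mathbb{R}$ convex, and there is $x\in S_f^=$ with $|p(u)-p(x)|\le\varepsilon\|u-x\|$ for all $u\in X$. $\mathrm{Ptb}_l(f,\varepsilon):=\{g\mid g(u)-f(u)=\langle x^*,u-x\rangle\ \forall u,\ \text{for some } x\in S_f^=,\ \xi\ge0,\ x^*\in\xi\mathbb{B}^*\text{ with }\xi+|\partial f|_{\rm bd}-\tau(f,x,\xi,0)\le\varepsilon\}$; $\mathrm{Ptb}^w_l(f,\varepsilon):=\{g\mid g(u)-f(u)=\langle x^*,u-x\rangle\ \forall u,\ \text{for some } x\in S_f^=,\ x^*\in\varepsilon\mathbb{B}^*\}$. For each family $\mathcal{F}$ among these, $\mathrm{Er}\{\mathcal{F}\}:=\inf_{g\in\mathcal{F}}\mathrm{Er}\,g$. *)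

theory Defs
  imports "HOL-Analysis.Analysis"
begin

text \<open>The dual space X^* is modelled as the type of bounded (= continuous) linear
functionals ('a =>L real) with the operator norm (norm topology).\<close>

definition proper_fun :: "('a \<Rightarrow> ereal) \<Rightarrow> bool" where
  "proper_fun f \<longleftrightarrow> (\<forall>x. f x \<noteq> -\<infinity>) \<and> (\<exists>x. f x \<noteq> \<infinity>)"

definition convex_fun :: "('a::real_vector \<Rightarrow> ereal) \<Rightarrow> bool" where
  "convex_fun f \<longleftrightarrow> convex {(x, t::real). f x \<le> ereal t}"

definition lsc_fun :: "('a::topological_space \<Rightarrow> ereal) \<Rightarrow> bool" where
  "lsc_fun f \<longleftrightarrow> (\<forall>t. closed {x. f x \<le> t})"

definition Gamma0 :: "('a::real_normed_vector \<Rightarrow> ereal) set" where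
  "Gamma0 = {f. proper_fun f \<and> convex_fun f \<and> lsc_fun f}"

definition subdiff :: "('a::real_normed_vector \<Rightarrow> ereal) \<Rightarrow> 'a \<Rightarrow> ('a \<Rightarrow>\<^sub>L real) set" where
  "subdiff f x = {xs. \<bar>f x\<bar> \<noteq> \<infinity> \<and>
      (\<forall>u. ereal (blinfun_apply xs (u - x)) \<le> f u - f x)}"

definition edist :: "'a::metric_space \<Rightarrow> 'a set \<Rightarrow> ereal" where
  "edist x S = (if S = {} then \<infinity> else ereal (infdist x S))"

definition Sf :: "('a \<Rightarrow> ereal) \<Rightarrow> 'a set" where
  "Sf f = {x. f x \<le> 0}"

definition Sf_eq :: "('a \<Rightarrow> ereal) \<Rightarrow> 'a set" where
  "Sf_eq f = {x. f x = 0}"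

definition Er :: "('a::real_normed_vector \<Rightarrow> ereal) \<Rightarrow> ereal" where
  "Er f = (INF x\<in>{x. f x > 0}. f x / edist x (Sf f))"

definition subdiff_bd :: "('a::real_normed_vector \<Rightarrow> ereal) \<Rightarrow> ereal" where
  "subdiff_bd f = (INF x\<in>Sf_eq f. edist 0 (frontier (subdiff f x)))"

definition tau :: "('a::real_normed_vector \<Rightarrow> ereal) \<Rightarrow> 'a \<Rightarrow> real \<Rightarrow> real \<Rightarrow> ereal" where
  "tau f x \<epsilon> \<delta> =
     (if 0 \<notin> interior (subdiff f x)
      then (INF u\<in>{u. f u \<ge> ereal (- \<epsilon> * norm (u - x) - \<delta>)}. edist 0 (subdiff f u))
      else edist 0 (frontier (subdiff f x)))"

definition Ptb :: "('a::real_normed_vector \<Rightarrow> ereal) \<Rightarrow> real \<Rightarrow> ('a \<Rightarrow> ereal) set" where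
  "Ptb f \<epsilon> = {g. Sf g \<noteq> {} \<and>
     (\<exists>p::'a \<Rightarrow> real. convex_on UNIV p \<and> g = (\<lambda>u. f u + ereal (p u)) \<and>
        (\<exists>x \<xi>. x \<in> Sf_eq f \<and> \<xi> \<ge> 0 \<and>
           ereal \<xi> + subdiff_bd f - tau f x \<xi> \<bar>p x\<bar> \<le> ereal \<epsilon> \<and>
           (\<forall>u. \<bar>p u - p x\<bar> \<le> \<xi> * norm (u - x))))}"

definition Ptb_w :: "('a::real_normed_vector \<Rightarrow> ereal) \<Rightarrow> real \<Rightarrow> ('a \<Rightarrow> ereal) set" where
  "Ptb_w f \<epsilon> = {g. Sf g \<noteq> {} \<and>
     (\<exists>p::'a \<Rightarrow> real. convex_on UNIV p \<and> g = (\<lambda>u. f u + ereal (p u)) \<and>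
        (\<exists>x. x \<in> Sf_eq f \<and> (\<forall>u. \<bar>p u - p x\<bar> \<le> \<epsilon> * norm (u - x))))}"

definition Ptb_l :: "('a::real_normed_vector \<Rightarrow> ereal) \<Rightarrow> real \<Rightarrow> ('a \<Rightarrow> ereal) set" where
  "Ptb_l f \<epsilon> = {g. \<exists>x \<xi> (xs::'a \<Rightarrow>\<^sub>L real). x \<in> Sf_eq f \<and> \<xi> \<ge> 0 \<and> norm xs \<le> \<xi> \<and>
        ereal \<xi> + subdiff_bd f - tau f x \<xi> 0 \<le> ereal \<epsilon> \<and>
        g = (\<lambda>u. f u + ereal (blinfun_apply xs (u - x)))}"

definition Ptb_wl :: "('a::real_normed_vector \<Rightarrow> ereal) \<Rightarrow> real \<Rightarrow> ('a \<Rightarrow> ereal) set" where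
  "Ptb_wl f \<epsilon> = {g. \<exists>x (xs::'a \<Rightarrow>\<^sub>L real). x \<in> Sf_eq f \<and> norm xs \<le> \<epsilon> \<and>
        g = (\<lambda>u. f u + ereal (blinfun_apply xs (u - x)))}"

definition Er_fam :: "('a::real_normed_vector \<Rightarrow> ereal) set \<Rightarrow> ereal" where
  "Er_fam F = (INF g\<in>F. Er g)"

definition eps_thr :: "(real \<Rightarrow> ('a::real_normed_vector \<Rightarrow> ereal) set) \<Rightarrow> ereal" where
  "eps_thr P = Inf {ereal \<epsilon> | \<epsilon>. \<epsilon> > 0 \<and> Er_fam (P \<epsilon>) = 0}"

end

theory Submission
  imports Defs
begin

definition sublin :: "('a::real_vector \<Rightarrow> real) \<Rightarrow> bool" where
  "sublin q \<longleftrightarrow> (\<forall>x y. q (x + y) \<le> q x + q y) \<and> (\<forall>c x. c > 0 \<longrightarrow> q (c *\<^sub>R x) \<le> c * q x)"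

lemma sublin_0: assumes "sublin q" shows "q 0 = 0"
proof -
  have a: "q 0 \<le> q 0 + q 0" using assms unfolding sublin_def by (metis add_0)
  have "q ((1/2) *\<^sub>R 0) \<le> (1/2) * q 0" using assms unfolding sublin_def by (meson half_gt_zero_iff zero_less_one)
  then show ?thesis using a by simp
qed

lemma sublin_neg: assumes "sublin q" shows "- q (- x) \<le> q x"
proof -
  have "q (x + - x) \<le> q x + q (-x)" using assms unfolding sublin_def by blast
  then show ?thesis using sublin_0[OF assms] by simp
qed

lemma HB_sublin:
  fixes q :: "'a::real_vector \<Rightarrow> real"
  assumes "sublin q"
  shows "\<exists>L. linear L \<and> (\<forall>x. L x \<le> q x)"
proof -
  define A where "A = {s. sublin s \<and> (\<forall>x. s x \<le> q x)}"
  define P where "P = (\<lambda>a b::'a\<Rightarrow>real. \<forall>x. b x \<le> a x)"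
  have po: "partial_order_on A (relation_of P A)"
    by (rule partial_order_on_relation_ofI) (auto simp: P_def intro: order_trans, rule ext, meson antisym)
  have ch: "\<exists>u \<in> A. \<forall>a \<in> C. P a u" if C: "C \<in> Chains (relation_of P A)" for C
  proof (cases "C = {}")
    case True
    then show ?thesis using assms by (auto simp: A_def)
  next
    case False
    have CA: "C \<subseteq> A" using Chains_relation_of[OF C] .
    have comp: "\<forall>s x. s \<in> C \<longrightarrow> t \<in> C \<longrightarrow> s x \<le> t x \<or> (\<forall>x. t x \<le> s x)" for t
      using C unfolding Chains_def relation_of_def P_def by blast
    have comp2: "s \<in> C \<Longrightarrow> t \<in> C \<Longrightarrow> (\<forall>x. s x \<le> t x) \<or> (\<forall>x. t x \<le> s x)" for s t
      using C unfolding Chains_def relation_of_def P_def by blast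
    define u where "u = (\<lambda>x. INF s\<in>C. s x)"
    have bdd: "bdd_below ((\<lambda>s. s x) ` C)" for x
    proof (rule bdd_belowI2)
      fix s assume "s \<in> C"
      then have "sublin s" "\<forall>x. s x \<le> q x" using CA by (auto simp: A_def)
      then show "- q (- x) \<le> s x" using sublin_neg[of s x] by (meson neg_le_iff_le order_trans)
    qed
    have low: "s \<in> C \<Longrightarrow> u x \<le> s x" for s x unfolding u_def by (rule cINF_lower[OF bdd])
    have great: "(\<And>s. s \<in> C \<Longrightarrow> m \<le> s x) \<Longrightarrow> m \<le> u x" for m x
      unfolding u_def using False by (intro cINF_greatest) auto
    have subadd: "u (x + y) \<le> u x + u y" for x y
    proof -
      have "u (x + y) - s x \<le> t y" if "s \<in> C" "t \<in> C" for s t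
      proof -
        have ss: "sublin s" "sublin t" using that CA by (auto simp: A_def)
        from comp2[OF that] show ?thesis
        proof
          assume st: "\<forall>x. s x \<le> t x"
          have "u (x+y) \<le> s (x+y)" by (rule low[OF that(1)])
          also have "\<dots> \<le> s x + s y" using ss unfolding sublin_def by blast
          finally show ?thesis using st[rule_format, of y] by linarith
        next
          assume st: "\<forall>x. t x \<le> s x"
          have "u (x+y) \<le> t (x+y)" by (rule low[OF that(2)])
          also have "\<dots> \<le> t x + t y" using ss unfolding sublin_def by blast
          finally show ?thesis using st[rule_format, of x] by linarith
        qed
      qed
      then have "u (x + y) - s x \<le> u y" if "s \<in> C" for s using that great by blast
      then have "u (x + y) - u y \<le> s x" if "s \<in> C" for s using that by smt
      then have "u (x + y) - u y \<le> u x" using great by blast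
      then show ?thesis by simp
    qed
    have hom: "u (c *\<^sub>R x) \<le> c * u x" if "c > 0" for c x
    proof -
      have "u (c *\<^sub>R x) / c \<le> s x" if "s \<in> C" for s
      proof -
        have "u (c *\<^sub>R x) \<le> s (c *\<^sub>R x)" by (rule low[OF that])
        also have "\<dots> \<le> c * s x" using that CA \<open>c>0\<close> by (auto simp: A_def sublin_def)
        finally show ?thesis using \<open>c > 0\<close> by (simp add: divide_le_eq mult.commute)
      qed
      then have "u (c *\<^sub>R x) / c \<le> u x" using great by blast
      then show ?thesis using \<open>c > 0\<close> by (simp add: divide_le_eq mult.commute)
    qed
    have uq: "u x \<le> q x" for x
    proof -
      obtain s where "s \<in> C" using False by blast
      then have "s \<in> A" using CA by blast
      then have "s x \<le> q x" by (simp add: A_def)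
      then show ?thesis using low[OF \<open>s \<in> C\<close>, of x] by linarith
    qed
    have "u \<in> A" using subadd hom uq by (auto simp: A_def sublin_def)
    moreover have "\<forall>a \<in> C. P a u" using low by (auto simp: P_def)
    ultimately show ?thesis by blast
  qed
  obtain m where mA: "m \<in> A" and mmin: "\<forall>a \<in> A. P m a \<longrightarrow> a = m"
    using predicate_Zorn[OF po ch] by blast
  have ms: "sublin m" and mq: "\<forall>x. m x \<le> q x" using mA by (auto simp: A_def)
  have m_add: "m (x + y) \<le> m x + m y" for x y using ms unfolding sublin_def by blast
  have m_hom: "c > 0 \<Longrightarrow> m (c *\<^sub>R x) \<le> c * m x" for c x using ms unfolding sublin_def by blast
  have odd: "m (- x0) = - m x0" for x0
  proof -
    define m' where "m' = (\<lambda>x. INF t\<in>{0..}. m (x + t *\<^sub>R x0) - t * m x0)"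
    have lb: "- m (- x) \<le> m (x + t *\<^sub>R x0) - t * m x0" if "t \<ge> 0" for x t
    proof -
      have "m (t *\<^sub>R x0) \<le> m (x + t *\<^sub>R x0) + m (- x)"
        using m_add[of "x + t *\<^sub>R x0" "- x"] by simp
      moreover have "m (t *\<^sub>R x0) = t * m x0"
      proof (cases "t = 0")
        case True then show ?thesis using sublin_0[OF ms] by simp
      next
        case False
        then have tp: "t > 0" using that by simp
        have "m x0 = m ((1/t) *\<^sub>R (t *\<^sub>R x0))" using tp by simp
        also have "\<dots> \<le> (1/t) * m (t *\<^sub>R x0)" using m_hom[of "1/t" "t *\<^sub>R x0"] tp by simp
        finally have "t * m x0 \<le> m (t *\<^sub>R x0)" using tp by (simp add: field_simps)
        then show ?thesis using m_hom[OF tp, of x0] by simp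
      qed
      ultimately show ?thesis by simp
    qed
    have bdd: "bdd_below ((\<lambda>t. m (x + t *\<^sub>R x0) - t * m x0) ` {0..})" for x
      using lb by (intro bdd_belowI2[where m="- m (- x)"]) auto
    have low: "t \<ge> 0 \<Longrightarrow> m' x \<le> m (x + t *\<^sub>R x0) - t * m x0" for x t
      unfolding m'_def by (rule cINF_lower[OF bdd]) auto
    have great: "(\<And>t. t \<ge> 0 \<Longrightarrow> z \<le> m (x + t *\<^sub>R x0) - t * m x0) \<Longrightarrow> z \<le> m' x" for z x
      unfolding m'_def by (intro cINF_greatest) auto
    have m'm: "m' x \<le> m x" for x using low[of 0 x] by simp
    have "m' (x + y) - m' x \<le> m' y" for x y
    proof -
      have "m' (x + y) - (m (x + s *\<^sub>R x0) - s * m x0) \<le> m (y + t *\<^sub>R x0) - t * m x0"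
        if "s \<ge> 0" "t \<ge> 0" for s t
      proof -
        have "m' (x+y) \<le> m ((x + y) + (s + t) *\<^sub>R x0) - (s + t) * m x0"
          using low[of "s+t"] that by simp
        also have "m ((x + y) + (s + t) *\<^sub>R x0) \<le> m (x + s *\<^sub>R x0) + m (y + t *\<^sub>R x0)"
          using m_add[of "x + s *\<^sub>R x0" "y + t *\<^sub>R x0"] by (simp add: algebra_simps)
        finally show ?thesis by (simp add: algebra_simps)
      qed
      then have "m' (x + y) - (m (x + s *\<^sub>R x0) - s * m x0) \<le> m' y" if "s \<ge> 0" for s
        using that great by blast
      then have "m' (x + y) - m' y \<le> m (x + s *\<^sub>R x0) - s * m x0" if "s \<ge> 0" for s
        using that by smt
      then have "m' (x + y) - m' y \<le> m' x" using great by blast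
      then show ?thesis by simp
    qed
    moreover have "m' (c *\<^sub>R x) \<le> c * m' x" if "c > 0" for c x
    proof -
      have "m' (c *\<^sub>R x) / c \<le> m (x + t *\<^sub>R x0) - t * m x0" if "t \<ge> 0" for t
      proof -
        have "m' (c *\<^sub>R x) \<le> m (c *\<^sub>R x + (c * t) *\<^sub>R x0) - (c * t) * m x0"
          using low[of "c*t"] that \<open>c>0\<close> by simp
        also have "m (c *\<^sub>R x + (c * t) *\<^sub>R x0) \<le> c * m (x + t *\<^sub>R x0)"
          using m_hom[OF \<open>c>0\<close>, of "x + t *\<^sub>R x0"] by (simp add: algebra_simps)
        finally have "m' (c *\<^sub>R x) \<le> c * (m (x + t *\<^sub>R x0) - t * m x0)"
          by (simp add: algebra_simps)
        then show ?thesis using \<open>c > 0\<close> by (simp add: divide_le_eq mult.commute)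
      qed
      then have "m' (c *\<^sub>R x) / c \<le> m' x" using great by blast
      then show ?thesis using \<open>c > 0\<close> by (simp add: divide_le_eq mult.commute)
    qed
    ultimately have "sublin m'" unfolding sublin_def by (smt (verit))
    then have "m' \<in> A" using m'm mq by (auto simp: A_def intro: order_trans)
    moreover have "P m m'" using m'm by (simp add: P_def)
    ultimately have "m' = m" using mmin by blast
    then have "m (- x0) \<le> m (- x0 + 1 *\<^sub>R x0) - 1 * m x0" using low[of 1 "- x0"] by simp
    then have "m (- x0) \<le> - m x0" using sublin_0[OF ms] by simp
    moreover have "- m x0 \<le> m (- x0)" using sublin_neg[OF ms, of "- x0"] by simp
    ultimately show ?thesis by simp
  qed
  have addeq: "m (x + y) = m x + m y" for x y
  proof -
    have "m (- x + - y) \<le> m (- x) + m (- y)" by (rule m_add)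
    then have "- m (x + y) \<le> - m x - m y" using odd[of "x+y"] odd[of x] odd[of y] by (simp add: algebra_simps)
    then show ?thesis using m_add[of x y] by simp
  qed
  have homeq: "m (c *\<^sub>R x) = c * m x" for c x
  proof -
    have pos: "m (c *\<^sub>R x) = c * m x" if "c > 0" for c x
    proof -
      have "m x = m ((1/c) *\<^sub>R (c *\<^sub>R x))" using that by simp
      also have "\<dots> \<le> (1/c) * m (c *\<^sub>R x)" using m_hom[of "1/c" "c *\<^sub>R x"] that by simp
      finally have "c * m x \<le> m (c *\<^sub>R x)" using that by (simp add: field_simps)
      then show ?thesis using m_hom[OF that, of x] by simp
    qed
    show ?thesis
    proof (cases c "0::real" rule: linorder_cases)
      case less
      then have "m (c *\<^sub>R x) = - m ((- c) *\<^sub>R x)" using odd[of "(-c) *\<^sub>R x"] by simp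
      also have "\<dots> = c * m x" using pos[of "-c" x] less by simp
      finally show ?thesis .
    next
      case equal then show ?thesis using sublin_0[OF ms] by simp
    next
      case greater then show ?thesis by (rule pos)
    qed
  qed
  have "linear m" by (rule linearI) (use addeq homeq in auto)
  then show ?thesis using mq by blast
qed

lemma sandwich:
  fixes a :: "'a::real_normed_vector \<Rightarrow> real" and D :: "'a set"
  assumes D: "convex D" "0 \<in> D" and a0: "a 0 = 0"
    and cvx: "\<And>x y t. x \<in> D \<Longrightarrow> y \<in> D \<Longrightarrow> 0 \<le> t \<Longrightarrow> t \<le> 1 \<Longrightarrow>
               a ((1 - t) *\<^sub>R x + t *\<^sub>R y) \<le> (1 - t) * a x + t * a y"
    and lb: "\<And>y. y \<in> D \<Longrightarrow> - M * norm y \<le> a y" and M: "M \<ge> 0"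
  shows "\<exists>L. bounded_linear L \<and> (\<forall>y\<in>D. L y \<le> a y) \<and> (\<forall>y. \<bar>L y\<bar> \<le> M * norm y)"
proof -
  define S where "S = (\<lambda>w. {(a y + M * norm (t *\<^sub>R w - y)) / t | t y. t > 0 \<and> y \<in> D})"
  define q where "q = (\<lambda>w. Inf (S w))"
  have SI: "(a y + M * norm (t *\<^sub>R w - y)) / t \<in> S w" if "t > 0" "y \<in> D" for t y w
    unfolding S_def using that by blast
  have Slb: "s \<ge> - M * norm w" if sS: "s \<in> S w" for s w
  proof -
    obtain t y where ty: "t > 0" "y \<in> D" "s = (a y + M * norm (t *\<^sub>R w - y)) / t"
      using sS unfolding S_def by blast
    have "norm y \<le> norm (t *\<^sub>R w - y) + norm (t *\<^sub>R w)"
      by (metis add.commute diff_add_cancel norm_minus_commute norm_triangle_ineq)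
    then have "M * norm y \<le> M * (norm (t *\<^sub>R w - y) + norm (t *\<^sub>R w))"
      using M by (simp add: mult_left_mono)
    then have "- M * norm (t *\<^sub>R w) \<le> a y + M * norm (t *\<^sub>R w - y)"
      using lb[OF ty(2)] by (simp add: algebra_simps)
    then have "- M * t * norm w \<le> a y + M * norm (t *\<^sub>R w - y)" using ty(1) by simp
    then show ?thesis using ty(1) ty(3) by (simp add: le_divide_eq mult.commute mult.left_commute)
  qed
  have Sne: "M * norm w \<in> S w" for w
  proof -
    have "(a 0 + M * norm (1 *\<^sub>R w - 0)) / 1 \<in> S w" using SI[OF _ D(2), of 1 w] by simp
    then show ?thesis using a0 by simp
  qed
  have bdd: "bdd_below (S w)" for w unfolding bdd_below_def using Slb by blast
  have qlow: "s \<in> S w \<Longrightarrow> q w \<le> s" for s w unfolding q_def by (rule cInf_lower[OF _ bdd])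
  have qgreat: "(\<And>s. s \<in> S w \<Longrightarrow> z \<le> s) \<Longrightarrow> z \<le> q w" for z w
    unfolding q_def using Sne by (intro cInf_greatest) auto
  have qM: "q w \<le> M * norm w" for w using qlow[OF Sne] .
  have qa: "q y \<le> a y" if "y \<in> D" for y
  proof -
    have "(a y + M * norm (1 *\<^sub>R y - y)) / 1 \<in> S y" using SI[OF _ that, of 1 y] by simp
    then show ?thesis using qlow by fastforce
  qed
  have subadd: "q (w + w') \<le> q w + q w'" for w w'
  proof -
    have key: "q (w + w') - s1 \<le> s2" if s12: "s1 \<in> S w" "s2 \<in> S w'" for s1 s2
    proof -
      obtain t1 y1 where 1: "t1 > 0" "y1 \<in> D" "s1 = (a y1 + M * norm (t1 *\<^sub>R w - y1)) / t1"
        using s12(1) unfolding S_def by blast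
      obtain t2 y2 where 2: "t2 > 0" "y2 \<in> D" "s2 = (a y2 + M * norm (t2 *\<^sub>R w' - y2)) / t2"
        using s12(2) unfolding S_def by blast
      define T where "T = t1 + t2"
      define \<tau> where "\<tau> = t1 * t2 / T"
      define y where "y = (1 - t1 / T) *\<^sub>R y1 + (t1 / T) *\<^sub>R y2"
      have T: "T > 0" using 1 2 by (simp add: T_def)
      have w1: "1 - t1 / T = t2 / T" using T by (simp add: T_def field_simps)
      have s01: "0 \<le> t1 / T" "t1 / T \<le> 1" using 1 2 T by (auto simp: T_def)
      have yD: "y \<in> D" unfolding y_def
        using convexD[OF D(1) 1(2) 2(2), of "1 - t1/T" "t1/T"] s01 by simp
      have ay: "a y \<le> (t2 / T) * a y1 + (t1 / T) * a y2"
        using cvx[OF 1(2) 2(2) s01] w1 by (simp add: y_def)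
      have eq: "\<tau> *\<^sub>R (w + w') - y = (t2 / T) *\<^sub>R (t1 *\<^sub>R w - y1) + (t1 / T) *\<^sub>R (t2 *\<^sub>R w' - y2)"
        using T unfolding \<tau>_def y_def w1 by (simp add: algebra_simps)
      have ny: "norm (\<tau> *\<^sub>R (w + w') - y) \<le> (t2 / T) * norm (t1 *\<^sub>R w - y1) + (t1 / T) * norm (t2 *\<^sub>R w' - y2)"
      proof -
        have "norm (\<tau> *\<^sub>R (w + w') - y) \<le> norm ((t2 / T) *\<^sub>R (t1 *\<^sub>R w - y1)) + norm ((t1 / T) *\<^sub>R (t2 *\<^sub>R w' - y2))"
          unfolding eq by (rule norm_triangle_ineq)
        also have "\<dots> = (t2 / T) * norm (t1 *\<^sub>R w - y1) + (t1 / T) * norm (t2 *\<^sub>R w' - y2)"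
          using 1 2 T by simp
        finally show ?thesis .
      qed
      have tau: "\<tau> > 0" using 1 2 T by (simp add: \<tau>_def)
      have "(a y + M * norm (\<tau> *\<^sub>R (w + w') - y)) / \<tau> \<in> S (w + w')"
        using SI tau yD by blast
      then have "q (w + w') \<le> (a y + M * norm (\<tau> *\<^sub>R (w + w') - y)) / \<tau>" by (rule qlow)
      also have "\<dots> \<le> ((t2 / T) * (a y1 + M * norm (t1 *\<^sub>R w - y1)) + (t1 / T) * (a y2 + M * norm (t2 *\<^sub>R w' - y2))) / \<tau>"
      proof (rule divide_right_mono)
        have "M * norm (\<tau> *\<^sub>R (w + w') - y) \<le> M * ((t2 / T) * norm (t1 *\<^sub>R w - y1) + (t1 / T) * norm (t2 *\<^sub>R w' - y2))"
          using ny M by (simp add: mult_left_mono)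
        then show "a y + M * norm (\<tau> *\<^sub>R (w + w') - y) \<le> (t2 / T) * (a y1 + M * norm (t1 *\<^sub>R w - y1)) + (t1 / T) * (a y2 + M * norm (t2 *\<^sub>R w' - y2))"
          using ay by (simp add: algebra_simps)
        show "0 \<le> \<tau>" using tau by simp
      qed
      also have "\<dots> = s1 + s2"
      proof -
        have gen: "((t2 / T) * X1 + (t1 / T) * X2) / \<tau> = X1 / t1 + X2 / t2" for X1 X2
        proof -
          have TT: "T \<noteq> 0" using T by simp
          have "((t2 / T) * X1 + (t1 / T) * X2) / \<tau> = ((t2 * X1 + t1 * X2) / T) / (t1 * t2 / T)"
            unfolding \<tau>_def by (simp add: add_divide_distrib)
          also have "\<dots> = (t2 * X1 + t1 * X2) / (t1 * t2)" using TT by simp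
          also have "\<dots> = X1 / t1 + X2 / t2" using 1(1) 2(1) by (simp add: field_simps)
          finally show ?thesis .
        qed
        show ?thesis unfolding gen 1(3) 2(3) ..
      qed
      finally show ?thesis by simp
    qed
    then have "q (w + w') - s1 \<le> q w'" if "s1 \<in> S w" for s1 using that qgreat by blast
    then have "q (w + w') - q w' \<le> s1" if "s1 \<in> S w" for s1 using that by fastforce
    then have "q (w + w') - q w' \<le> q w" using qgreat by blast
    then show ?thesis by simp
  qed
  have hom: "q (c *\<^sub>R w) \<le> c * q w" if "c > 0" for c w
  proof -
    have "q (c *\<^sub>R w) / c \<le> s" if sS: "s \<in> S w" for s
    proof -
      obtain t y where ty: "t > 0" "y \<in> D" "s = (a y + M * norm (t *\<^sub>R w - y)) / t"
        using sS unfolding S_def by blast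
      have "(a y + M * norm ((t / c) *\<^sub>R (c *\<^sub>R w) - y)) / (t / c) \<in> S (c *\<^sub>R w)"
        unfolding S_def using ty \<open>c > 0\<close> by (intro CollectI exI[of _ "t/c"] exI[of _ y]) auto
      then have "q (c *\<^sub>R w) \<le> (a y + M * norm ((t / c) *\<^sub>R (c *\<^sub>R w) - y)) / (t / c)" by (rule qlow)
      also have "\<dots> = c * s" using ty \<open>c > 0\<close> by simp
      finally show ?thesis using \<open>c > 0\<close> by (simp add: divide_le_eq mult.commute)
    qed
    then have "q (c *\<^sub>R w) / c \<le> q w" using qgreat by blast
    then show ?thesis using \<open>c > 0\<close> by (simp add: divide_le_eq mult.commute)
  qed
  have "sublin q" unfolding sublin_def using subadd hom by blast
  then obtain L where L: "linear L" "\<forall>x. L x \<le> q x" using HB_sublin by blast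
  have Lb: "\<bar>L y\<bar> \<le> M * norm y" for y
  proof -
    have "L y \<le> M * norm y" using L(2) qM order_trans by blast
    moreover have "L (- y) \<le> M * norm y" using L(2) qM[of "- y"] order_trans by fastforce
    moreover have "L (- y) = - L y" using linear_neg[OF L(1)] .
    ultimately show ?thesis by linarith
  qed
  have "bounded_linear L"
    using L(1) Lb by (intro bounded_linear_intro[where K=M])
      (auto simp: linear_add linear_scale mult.commute)
  then show ?thesis using L(2) qa Lb order_trans by blast
qed

lemma small_geo: fixes c :: real assumes that: "e > 0" shows "\<exists>N. c / 2 ^ N < e"
proof -
  have "(\<lambda>n. c / 2 ^ n) \<longlonglongrightarrow> 0"
    by (intro tendsto_divide_0[OF tendsto_const]) (simp add: filterlim_realpow_sequentially_gt1)
  then have "eventually (\<lambda>n. c / 2 ^ n < e) sequentially" using that order_tendstoD(2) by blast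
  then show ?thesis by (meson eventually_sequentially order.refl)
qed

lemma tri3: fixes a b c :: "'a::real_normed_vector" shows "norm (a - b) \<le> norm (a - c) + norm (b - c)"
proof -
  have "norm (a - b) \<le> norm (a - c) + norm (c - b)" by (rule norm_diff_triangle_ineq[of a c c b, simplified])
  then show ?thesis by (simp add: norm_minus_commute)
qed

lemma ekeland:
  fixes \<psi> :: "'a::banach \<Rightarrow> real" and D :: "'a set"
  assumes lsc: "\<And>T. closed {u \<in> D. \<psi> u \<le> T}" and nn: "\<And>u. u \<in> D \<Longrightarrow> \<psi> u \<ge> 0"
    and u0: "u0 \<in> D" and lam: "lam > 0"
  shows "\<exists>v\<in>D. \<psi> v + lam * norm (v - u0) \<le> \<psi> u0 \<and> (\<forall>u\<in>D. \<psi> v \<le> \<psi> u + lam * norm (u - v))"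
proof -
  define S where "S = (\<lambda>w. {u \<in> D. \<psi> u + lam * norm (u - w) \<le> \<psi> w})"
  have SD: "S w \<subseteq> D" for w by (auto simp: S_def)
  have wS: "w \<in> D \<Longrightarrow> w \<in> S w" for w by (simp add: S_def)
  have Smono: "S u \<subseteq> S w" if "u \<in> S w" for u w
  proof
    fix z assume "z \<in> S u"
    then have "z \<in> D" "\<psi> z + lam * norm (z - u) \<le> \<psi> u" by (auto simp: S_def)
    moreover have "\<psi> u + lam * norm (u - w) \<le> \<psi> w" using that by (simp add: S_def)
    moreover have "norm (z - w) \<le> norm (z - u) + norm (u - w)" by (rule norm_diff_triangle_ineq[of z u u w, simplified])
    moreover have "lam * norm (z - w) \<le> lam * (norm (z - u) + norm (u - w))"
      using calculation(4) lam by (simp add: mult_left_mono)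
    ultimately show "z \<in> S w" unfolding S_def by (simp add: algebra_simps)
  qed
  have Sclosed: "closed (S w)" for w
  proof (rule closed_sequential_limits[THEN iffD2], intro allI impI, elim conjE)
    fix x l assume xS: "\<forall>n. x n \<in> S w" and xl: "x \<longlonglongrightarrow> l"
    have H: "l \<in> D \<and> \<psi> l \<le> \<psi> w - lam * norm (l - w) + \<delta>" if "\<delta> > 0" for \<delta>
    proof -
      have "((\<lambda>n. norm (x n - w)) \<longlonglongrightarrow> norm (l - w))" by (intro tendsto_intros xl)
      then have "eventually (\<lambda>n. norm (x n - w) > norm (l - w) - \<delta> / lam) sequentially"
        using that lam by (intro order_tendstoD(1)) auto
      then have ev: "eventually (\<lambda>n. x n \<in> {u \<in> D. \<psi> u \<le> \<psi> w - lam * norm (l - w) + \<delta>}) sequentially"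
      proof (rule eventually_mono)
        fix n assume "norm (x n - w) > norm (l - w) - \<delta> / lam"
        then have "lam * norm (x n - w) > lam * norm (l - w) - \<delta>"
          using lam by (simp add: right_diff_distrib field_simps)
        then show "x n \<in> {u \<in> D. \<psi> u \<le> \<psi> w - lam * norm (l - w) + \<delta>}"
          using xS[rule_format, of n] by (auto simp: S_def)
      qed
      have "l \<in> {u \<in> D. \<psi> u \<le> \<psi> w - lam * norm (l - w) + \<delta>}"
        by (rule Lim_in_closed_set[OF lsc ev _ xl]) simp
      then show ?thesis by simp
    qed
    have "l \<in> D" using H[of 1] by simp
    moreover have "\<psi> l \<le> \<psi> w - lam * norm (l - w)"
      by (rule field_le_epsilon) (use H in blast)
    ultimately show "l \<in> S w" by (simp add: S_def)
  qed
  define m where "m = (\<lambda>w. Inf (\<psi> ` S w))"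
  have bdd: "bdd_below (\<psi> ` S w)" for w
    using nn SD by (intro bdd_belowI2[where m=0]) auto
  have mle: "u \<in> S w \<Longrightarrow> m w \<le> \<psi> u" for u w unfolding m_def by (rule cInf_lower[OF _ bdd]) simp
  have ex: "\<exists>u. u \<in> S w \<and> 2 * \<psi> u \<le> \<psi> w + m w" if wD: "w \<in> D" for w
  proof (cases "m w < \<psi> w")
    case True
    have "Inf (\<psi> ` S w) < (\<psi> w + m w) / 2" using True by (simp add: m_def)
    then obtain y where "y \<in> \<psi> ` S w" "y < (\<psi> w + m w) / 2"
      using cInf_less_iff[OF _ bdd] wS[OF wD] by blast
    then show ?thesis by force
  next
    case False
    then have "m w = \<psi> w" using mle[OF wS[OF wD]] by simp
    then show ?thesis using wS[OF wD] by (intro exI[of _ w]) simp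
  qed
  define nxt where "nxt = (\<lambda>w. SOME u. u \<in> S w \<and> 2 * \<psi> u \<le> \<psi> w + m w)"
  have nxt: "nxt w \<in> S w \<and> 2 * \<psi> (nxt w) \<le> \<psi> w + m w" if "w \<in> D" for w
    unfolding nxt_def using someI_ex[OF ex[OF that]] .
  define x where "x = rec_nat u0 (\<lambda>_ w. nxt w)"
  have x0: "x 0 = u0" and xs: "x (Suc n) = nxt (x n)" for n by (simp_all add: x_def)
  have xD: "x n \<in> D" for n
  proof (induction n)
    case 0 then show ?case using u0 x0 by simp
  next
    case (Suc n) then show ?case using nxt[OF Suc] SD xs by auto
  qed
  have xstep: "x (Suc n) \<in> S (x n)" for n using nxt[OF xD[of n]] xs by simp
  have xin: "x k \<in> S (x n)" if "n \<le> k" for n k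
    using that
  proof (induction k)
    case 0 then show ?case using wS xD by simp
  next
    case (Suc k)
    show ?case
    proof (cases "n = Suc k")
      case True then show ?thesis using wS xD by simp
    next
      case False
      then have "x k \<in> S (x n)" using Suc by simp
      then show ?thesis using Smono xstep by blast
    qed
  qed
  define e where "e = (\<lambda>n. \<psi> (x n) - m (x n))"
  have mmono: "m (x n) \<le> m (x (Suc n))" for n
    unfolding m_def
  proof (rule cInf_superset_mono)
    show "\<psi> ` S (x (Suc n)) \<noteq> {}" using wS[OF xD[of "Suc n"]] by blast
    show "bdd_below (\<psi> ` S (x n))" by (rule bdd)
    show "\<psi> ` S (x (Suc n)) \<subseteq> \<psi> ` S (x n)" using Smono[OF xstep[of n]] by blast
  qed
  have estep: "e (Suc n) \<le> e n / 2" for n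
    using nxt[OF xD[of n]] mmono[of n] xs[of n] by (simp add: e_def)
  have ebound: "e n \<le> e 0 / 2 ^ n" for n
  proof (induction n)
    case 0 then show ?case by simp
  next
    case (Suc n)
    have "e n / 2 \<le> (e 0 / 2 ^ n) / 2" using Suc.IH by (rule divide_right_mono) simp
    then show ?case using estep[of n] by simp
  qed
  have dist_bound: "lam * norm (u - x n) \<le> e n" if "u \<in> S (x n)" for u n
    using that mle[OF that] by (simp add: S_def e_def)
  have xbound: "norm (x k - x n) \<le> e 0 / 2 ^ n / lam" if "n \<le> k" for n k
  proof -
    have "lam * norm (x k - x n) \<le> e 0 / 2 ^ n" using dist_bound[OF xin[OF that]] ebound[of n] by linarith
    then show ?thesis using lam by (simp add: pos_le_divide_eq mult_ac)
  qed
  have "Cauchy x"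
  proof (rule CauchyI)
    fix \<epsilon> :: real assume "\<epsilon> > 0"
    obtain N where N: "(e 0 / lam) / 2 ^ N < \<epsilon> / 2" using small_geo \<open>\<epsilon> > 0\<close> by (metis half_gt_zero)
    have "norm (x a - x b) < \<epsilon>" if "a \<ge> N" "b \<ge> N" for a b
    proof -
      have "norm (x a - x N) \<le> e 0 / 2 ^ N / lam" "norm (x b - x N) \<le> e 0 / 2 ^ N / lam"
        using xbound[OF that(1)] xbound[OF that(2)] by auto
      moreover have "norm (x a - x b) \<le> norm (x a - x N) + norm (x b - x N)"
        by (rule tri3)
      moreover have "e 0 / 2 ^ N / lam = (e 0 / lam) / 2 ^ N" by simp
      ultimately show ?thesis using N by linarith
    qed
    then show "\<exists>M. \<forall>m\<ge>M. \<forall>n\<ge>M. norm (x m - x n) < \<epsilon>" by blast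
  qed
  then obtain v where xv: "x \<longlonglongrightarrow> v" using Cauchy_convergent_iff convergent_def by blast
  have vS: "v \<in> S (x n)" for n
  proof (rule Lim_in_closed_set[OF Sclosed _ _ xv])
    show "\<forall>\<^sub>F k in sequentially. x k \<in> S (x n)" using xin eventually_sequentially by blast
  qed simp
  have vD: "v \<in> D" using vS SD by blast
  have first: "\<psi> v + lam * norm (v - u0) \<le> \<psi> u0" using vS[of 0] x0 by (simp add: S_def)
  have second: "\<psi> v \<le> \<psi> u + lam * norm (u - v)" if uD: "u \<in> D" for u
  proof (rule ccontr)
    assume nt: "\<not> ?thesis"
    then have "u \<in> S v" using uD by (simp add: S_def)
    then have uS: "u \<in> S (x n)" for n using Smono vS by blast
    have "norm (u - v) \<le> 2 * (e 0 / lam) / 2 ^ n" for n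
    proof -
      have "lam * norm (u - x n) \<le> e 0 / 2 ^ n" "lam * norm (v - x n) \<le> e 0 / 2 ^ n"
        using dist_bound[OF uS[of n]] dist_bound[OF vS[of n]] ebound[of n] by auto
      then have "norm (u - x n) \<le> (e 0 / 2 ^ n) / lam" "norm (v - x n) \<le> (e 0 / 2 ^ n) / lam"
        using lam by (simp_all add: pos_le_divide_eq mult_ac)
      then have "norm (u - x n) \<le> (e 0 / lam) / 2 ^ n" "norm (v - x n) \<le> (e 0 / lam) / 2 ^ n"
        by (simp_all add: divide_divide_eq_left mult.commute)
      moreover have "norm (u - v) \<le> norm (u - x n) + norm (v - x n)"
        by (rule tri3)
      moreover have "2 * (e 0 / lam) / 2 ^ n = (e 0 / lam) / 2 ^ n + (e 0 / lam) / 2 ^ n" by simp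
      ultimately show ?thesis by linarith
    qed
    then have "norm (u - v) \<le> 0"
    proof -
      assume h: "\<And>n. norm (u - v) \<le> 2 * (e 0 / lam) / 2 ^ n"
      show ?thesis
      proof (rule ccontr)
        assume "\<not> norm (u - v) \<le> 0"
        then have "norm (u - v) > 0" by simp
        then obtain N where "2 * (e 0 / lam) / 2 ^ N < norm (u - v)" using small_geo by blast
        then show False using h[of N] by simp
      qed
    qed
    then have "u = v" by simp
    then show False using nt by simp
  qed
  show ?thesis using vD first second by blast
qed

lemma Er_nonneg: "Er g \<ge> 0"
  unfolding Er_def
  by (rule INF_greatest) (auto intro!: zero_le_divide_ereal simp: edist_def infdist_nonneg)

lemma Er_fam_nonneg: "Er_fam F \<ge> 0"
  unfolding Er_fam_def by (rule INF_greatest) (rule Er_nonneg)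

lemma Er_fam_anti: "F \<subseteq> G \<Longrightarrow> Er_fam G \<le> Er_fam F"
  unfolding Er_fam_def by (rule INF_superset_mono) auto

lemma eps_thr_mono:
  assumes "\<And>\<epsilon>. \<epsilon> > 0 \<Longrightarrow> Er_fam (P \<epsilon>) = 0 \<Longrightarrow> Er_fam (Q \<epsilon>) = 0"
  shows "eps_thr Q \<le> eps_thr P"
  unfolding eps_thr_def by (rule Inf_superset_mono) (auto dest: assms)

lemma eps_thr_sub:
  assumes "\<And>\<epsilon>. \<epsilon> > 0 \<Longrightarrow> P \<epsilon> \<subseteq> Q \<epsilon>"
  shows "eps_thr Q \<le> eps_thr P"
proof (rule eps_thr_mono)
  fix \<epsilon> :: real assume "\<epsilon> > 0" "Er_fam (P \<epsilon>) = 0"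
  then show "Er_fam (Q \<epsilon>) = 0"
    using Er_fam_anti[OF assms[OF \<open>\<epsilon> > 0\<close>]] Er_fam_nonneg[of "Q \<epsilon>"] by simp
qed

lemma convex_lin: "convex_on UNIV (\<lambda>u. blinfun_apply xs (u - x))"
  by (rule convex_onI) (simp_all add: blinfun.diff_right blinfun.add_right blinfun.scaleR_right algebra_simps)

lemma lin_lip: "\<bar>blinfun_apply xs (u - x) - blinfun_apply xs (x - x)\<bar> \<le> norm xs * norm (u - x)"
  using norm_blinfun[of xs "u - x"] by simp

lemma wl_sub_w: "Ptb_wl f \<epsilon> \<subseteq> Ptb_w f \<epsilon>"
proof
  fix g assume "g \<in> Ptb_wl f \<epsilon>"
  then obtain x xs where x: "x \<in> Sf_eq f" "norm xs \<le> \<epsilon>" "g = (\<lambda>u. f u + ereal (blinfun_apply xs (u - x)))"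
    unfolding Ptb_wl_def by blast
  have "x \<in> Sf g" using x by (simp add: Sf_def Sf_eq_def)
  moreover have "\<forall>u. \<bar>blinfun_apply xs (u - x) - blinfun_apply xs (x - x)\<bar> \<le> \<epsilon> * norm (u - x)"
    using lin_lip x(2) by (meson mult_right_mono norm_ge_zero order_trans)
  ultimately show "g \<in> Ptb_w f \<epsilon>" unfolding Ptb_w_def using x convex_lin by blast
qed

lemma l_sub: "Ptb_l f \<epsilon> \<subseteq> Ptb f \<epsilon>"
proof
  fix g assume "g \<in> Ptb_l f \<epsilon>"
  then obtain x \<xi> xs where x: "x \<in> Sf_eq f" "\<xi> \<ge> 0" "norm xs \<le> \<xi>"
      "ereal \<xi> + subdiff_bd f - tau f x \<xi> 0 \<le> ereal \<epsilon>" "g = (\<lambda>u. f u + ereal (blinfun_apply xs (u - x)))"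
    unfolding Ptb_l_def by blast
  have "x \<in> Sf g" using x by (simp add: Sf_def Sf_eq_def)
  moreover have "\<forall>u. \<bar>blinfun_apply xs (u - x) - blinfun_apply xs (x - x)\<bar> \<le> \<xi> * norm (u - x)"
    using lin_lip x(3) by (meson mult_right_mono norm_ge_zero order_trans)
  moreover have "ereal \<xi> + subdiff_bd f - tau f x \<xi> \<bar>blinfun_apply xs (x - x)\<bar> \<le> ereal \<epsilon>"
    using x(4) by simp
  ultimately show "g \<in> Ptb f \<epsilon>" unfolding Ptb_def using x convex_lin by blast
qed

lemma subdiff_closed: "closed (subdiff f x)"
proof (cases "\<bar>f x\<bar> = \<infinity>")
  case True
  then have "subdiff f x = {}" by (simp add: subdiff_def)
  then show ?thesis by simp
next
  case False
  then have "subdiff f x = (\<Inter>u. {xs. ereal (blinfun_apply xs (u - x)) \<le> f u - f x})"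
    by (auto simp: subdiff_def)
  moreover have "closed {xs. ereal (blinfun_apply xs (u - x)) \<le> f u - f x}" for u
  proof (rule closed_Collect_le)
    have "continuous_on UNIV (\<lambda>xs::'a \<Rightarrow>\<^sub>L real. blinfun_apply xs (u - x))"
      by (intro continuous_intros)
    then show "continuous_on UNIV (\<lambda>xs::'a \<Rightarrow>\<^sub>L real. ereal (blinfun_apply xs (u - x)))"
      by (intro continuous_on_ereal)
  qed (rule continuous_on_const)
  ultimately show ?thesis by (auto intro: closed_INT)
qed

lemma key2:
  fixes f :: "'a::real_normed_vector \<Rightarrow> ereal"
  assumes eps: "ereal \<epsilon> > subdiff_bd f" and eta: "\<eta> > 0"
  shows "\<exists>g\<in>Ptb_wl f \<epsilon>. Er g \<le> ereal \<eta>"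
proof -
  obtain x where xS: "x \<in> Sf_eq f" and xl: "edist 0 (frontier (subdiff f x)) < ereal \<epsilon>"
    using eps unfolding subdiff_bd_def by (auto simp: INF_less_iff)
  define C where "C = subdiff f x"
  have fx: "f x = 0" using xS by (simp add: Sf_eq_def)
  have Fne: "frontier C \<noteq> {}" using xl by (auto simp: edist_def C_def)
  then have "infdist 0 (frontier C) < \<epsilon>" using xl by (simp add: edist_def C_def)
  then have "(INF a\<in>frontier C. dist 0 a) < \<epsilon>" using infdist_notempty[OF Fne] by simp
  then obtain y where yF: "y \<in> frontier C" and ny: "dist 0 y < \<epsilon>"
    using cINF_less_iff[OF Fne bdd_below_image_dist] by blast
  have yC: "y \<in> C" using yF subdiff_closed[of f x] unfolding C_def
    by (metis closure_closed frontier_def Diff_iff)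
  have yI: "y \<notin> interior C" using yF by (simp add: frontier_def)
  define r where "r = min (\<eta> / 4) (\<epsilon> - norm y)"
  have r: "r > 0" using eta ny unfolding r_def by auto
  obtain z where zb: "dist y z < r" and zC: "z \<notin> C"
    using yI r unfolding mem_interior by (metis subsetI mem_ball)
  obtain u where fu: "f u < ereal (blinfun_apply z (u - x))"
    using zC fx unfolding C_def subdiff_def by (auto simp: not_le)
  have yu: "ereal (blinfun_apply y (w - x)) \<le> f w" for w
    using yC fx unfolding C_def subdiff_def by auto
  define v where "v = z - y"
  define xs where "xs = v - y"
  have nv: "norm v < r" using zb by (simp add: v_def dist_norm norm_minus_commute)
  have nxs: "norm xs \<le> \<epsilon>"
  proof -
    have "norm xs \<le> norm v + norm y" unfolding xs_def by (rule norm_triangle_ineq4)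
    also have "\<dots> \<le> \<epsilon>" using nv unfolding r_def by auto
    finally show ?thesis .
  qed
  define g where "g = (\<lambda>w. f w + ereal (blinfun_apply xs (w - x)))"
  have gP: "g \<in> Ptb_wl f \<epsilon>" unfolding Ptb_wl_def g_def using xS nxs by blast
  obtain fu' where fu': "f u = ereal fu'" using fu yu[of u] by (cases "f u") auto
  define A where "A = blinfun_apply v (u - x)"
  have yuu: "blinfun_apply y (u - x) \<le> fu'" using yu[of u] fu' by simp
  have zuu: "fu' < blinfun_apply y (u - x) + A" using fu fu'
    by (simp add: A_def v_def blinfun.diff_left)
  have Apos: "A > 0" using yuu zuu by simp
  have gu: "g u = ereal (fu' - blinfun_apply y (u - x) + A)"
    using fu' by (simp add: g_def xs_def A_def blinfun.diff_left)
  have gupos: "g u > 0" using gu yuu Apos by simp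
  have vpos: "norm v > 0"
  proof -
    have "A \<le> norm v * norm (u - x)" using norm_blinfun[of v "u - x"] unfolding A_def by simp
    then show ?thesis using Apos by (metis mult_eq_0_iff norm_ge_zero order.not_eq_order_implies_strict not_le)
  qed
  have xSg: "x \<in> Sf g" by (simp add: Sf_def g_def fx)
  have distlb: "A / norm v \<le> dist u w" if "w \<in> Sf g" for w
  proof -
    have gw: "f w + ereal (blinfun_apply xs (w - x)) \<le> 0" using that by (simp add: Sf_def g_def)
    obtain fw where fw: "f w = ereal fw" using gw yu[of w] by (cases "f w") auto
    have "blinfun_apply y (w - x) \<le> fw" using yu[of w] fw by simp
    moreover have "fw + blinfun_apply xs (w - x) \<le> 0" using gw fw by simp
    ultimately have vw: "blinfun_apply v (w - x) \<le> 0" by (simp add: xs_def blinfun.diff_left)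
    have "blinfun_apply v (u - w) = A - blinfun_apply v (w - x)"
      unfolding A_def by (simp add: blinfun.diff_right)
    then have "A \<le> blinfun_apply v (u - w)" using vw by linarith
    also have "\<dots> \<le> norm v * norm (u - w)" using norm_blinfun[of v "u - w"] by simp
    finally show ?thesis using vpos by (simp add: dist_norm divide_le_eq mult.commute)
  qed
  define D where "D = infdist u (Sf g)"
  have D: "A / norm v \<le> D"
  proof -
    have ne: "Sf g \<noteq> {}" using xSg by blast
    show ?thesis unfolding D_def infdist_notempty[OF ne] by (rule cINF_greatest[OF ne distlb])
  qed
  have Dpos: "D > 0" using D Apos vpos by (smt (verit) divide_pos_pos)
  have "Er g \<le> g u / edist u (Sf g)"
    unfolding Er_def using gupos by (intro INF_lower) simp
  also have "\<dots> = ereal ((fu' - blinfun_apply y (u - x) + A) / D)"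
    using xSg Dpos by (auto simp: edist_def gu D_def)
  also have "\<dots> \<le> ereal \<eta>"
  proof -
    have "(fu' - blinfun_apply y (u - x) + A) / D \<le> (2 * A) / D"
      using zuu Dpos by (intro divide_right_mono) auto
    also have "\<dots> \<le> (2 * A) / (A / norm v)"
    proof (rule divide_left_mono[OF D])
      show "0 \<le> 2 * A" using Apos by simp
      have "0 < A / norm v" using Apos vpos by simp
      then show "0 < D * (A / norm v)" using Dpos by (rule mult_pos_pos[OF _, rotated])
    qed
    also have "\<dots> = 2 * norm v" using Apos vpos by (simp add: field_simps)
    also have "\<dots> \<le> \<eta>" using nv norm_ge_zero[of v] unfolding r_def by linarith
    finally show ?thesis by simp
  qed
  finally show ?thesis using gP by blast
qed

lemma ineq2:
  fixes f :: "'a::real_normed_vector \<Rightarrow> ereal"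
  shows "eps_thr (Ptb_wl f) \<le> subdiff_bd f"
proof (rule dense_ge)
  fix y assume y: "subdiff_bd f < y"
  have bd0: "subdiff_bd f \<ge> 0"
    unfolding subdiff_bd_def by (rule INF_greatest) (auto simp: edist_def infdist_nonneg)
  show "eps_thr (Ptb_wl f) \<le> y"
  proof (cases y)
    case (real r)
    have "0 < ereal r" using y bd0 real by (metis order.strict_trans1)
    then have rpos: "r > 0" by simp
    have "Er_fam (Ptb_wl f r) \<le> 0"
    proof (rule ereal_le_epsilon2)
      fix e :: real assume "e > 0"
      then obtain g where "g \<in> Ptb_wl f r" "Er g \<le> ereal e" using key2 y real by blast
      then have "Er_fam (Ptb_wl f r) \<le> ereal e" unfolding Er_fam_def by (meson INF_lower2)
      then show "Er_fam (Ptb_wl f r) \<le> 0 + ereal e" by simp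
    qed
    then have "Er_fam (Ptb_wl f r) = 0" using Er_fam_nonneg by (metis antisym)
    then show ?thesis unfolding eps_thr_def real using rpos by (intro Inf_lower) blast
  qed (use y in auto)
qed

lemma lip_global:
  fixes p :: "'a::real_normed_vector \<Rightarrow> real"
  assumes cv: "convex_on UNIV p" and lip: "\<forall>u. \<bar>p u - p x\<bar> \<le> \<xi> * norm (u - x)" and xi: "\<xi> \<ge> 0"
  shows "p a - p b \<le> \<xi> * norm (a - b)"
proof -
  define K where "K = p x - p b + \<xi> * norm (b - x)"
  have K0: "K \<ge> 0" using lip[rule_format, of b] unfolding K_def by linarith
  have H: "p a - p b \<le> K / t + \<xi> * norm (a - b)" if t: "t \<ge> 1" for t
  proof -
    define c where "c = b + t *\<^sub>R (a - b)"
    have tpos: "t > 0" using t by simp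
    have aeq: "a = (1 - 1/t) *\<^sub>R b + (1/t) *\<^sub>R c"
      using tpos unfolding c_def by (simp add: algebra_simps)
    have "p a \<le> (1 - 1/t) * p b + (1/t) * p c"
      using convex_onD[OF cv, of "1/t" b c] t aeq by simp
    moreover have "p c \<le> p x + \<xi> * (norm (b - x) + t * norm (a - b))"
    proof -
      have "p c \<le> p x + \<xi> * norm (c - x)" using lip[rule_format, of c] by linarith
      moreover have "norm (c - x) \<le> norm (b - x) + t * norm (a - b)"
      proof -
        have "c - x = (b - x) + t *\<^sub>R (a - b)" by (simp add: c_def algebra_simps)
        then have "norm (c - x) \<le> norm (b - x) + norm (t *\<^sub>R (a - b))" by (metis norm_triangle_ineq)
        then show ?thesis using tpos by simp
      qed
      ultimately show ?thesis using xi by (smt (verit) mult_left_mono)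
    qed
    ultimately have "p a - p b \<le> (1/t) * (p c - p b)" by (simp add: algebra_simps)
    also have "\<dots> \<le> (1/t) * (K + \<xi> * t * norm (a - b))"
      using \<open>p c \<le> _\<close> tpos unfolding K_def by (intro mult_left_mono) (simp_all add: algebra_simps)
    also have "\<dots> = K / t + \<xi> * norm (a - b)" using tpos by (simp add: field_simps)
    finally show ?thesis .
  qed
  show ?thesis
  proof (rule field_le_epsilon)
    fix \<delta> :: real assume d: "\<delta> > 0"
    define t where "t = max 1 (K / \<delta>)"
    have t1: "t \<ge> 1" by (simp add: t_def)
    have "K / t \<le> \<delta>"
    proof -
      have "K / \<delta> \<le> t" by (simp add: t_def)
      then have "K \<le> t * \<delta>" using d by (simp add: divide_le_eq)
      then show ?thesis using t1 by (simp add: divide_le_eq mult.commute)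
    qed
    then show "p a - p b \<le> \<xi> * norm (a - b) + \<delta>" using H[OF t1] by linarith
  qed
qed

lemma convex_fun_ineq:
  assumes "convex_fun f" "f a = ereal A" "f b = ereal B" "0 \<le> t" "t \<le> 1"
  shows "f ((1 - t) *\<^sub>R a + t *\<^sub>R b) \<le> ereal ((1 - t) * A + t * B)"
proof -
  have c: "convex {(x, s::real). f x \<le> ereal s}" using assms(1) by (simp add: convex_fun_def)
  have "(1 - t) *\<^sub>R (a, A) + t *\<^sub>R (b, B) \<in> {(x, s::real). f x \<le> ereal s}"
    by (rule convexD[OF c]) (use assms in auto)
  then show ?thesis by simp
qed

lemma lsc_sum:
  fixes f :: "'a::real_normed_vector \<Rightarrow> ereal" and p :: "'a \<Rightarrow> real"
  assumes lsc: "lsc_fun f" and lip: "\<And>a b. \<bar>p a - p b\<bar> \<le> \<xi> * norm (a - b)" and xi: "\<xi> \<ge> 0"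
  shows "closed {u. f u + ereal (p u) \<le> ereal T}"
proof (rule closed_sequential_limits[THEN iffD2], intro allI impI, elim conjE)
  fix x l assume xS: "\<forall>n. x n \<in> {u. f u + ereal (p u) \<le> ereal T}" and xl: "x \<longlonglongrightarrow> l"
  have H: "f l \<le> ereal (T - p l + \<delta>)" if d: "\<delta> > 0" for \<delta>
  proof -
    have "eventually (\<lambda>n. dist (x n) l < \<delta> / (\<xi> + 1)) sequentially"
      using xl d xi by (simp add: tendsto_iff)
    then have ev: "eventually (\<lambda>n. x n \<in> {u. f u \<le> ereal (T - p l + \<delta>)}) sequentially"
    proof (rule eventually_mono)
      fix n assume dn: "dist (x n) l < \<delta> / (\<xi> + 1)"
      have "\<bar>p (x n) - p l\<bar> \<le> \<xi> * norm (x n - l)" by (rule lip)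
      also have "\<dots> \<le> \<xi> * (\<delta> / (\<xi> + 1))"
      proof -
        have "norm (x n - l) \<le> \<delta> / (\<xi> + 1)" using dn by (simp add: dist_norm)
        then show ?thesis using xi by (rule mult_left_mono)
      qed
      also have "\<dots> \<le> \<delta>" using xi d by (simp add: field_simps)
      finally have pn: "p l - \<delta> \<le> p (x n)" by linarith
      have "f (x n) + ereal (p (x n)) \<le> ereal T" using xS by simp
      then have "f (x n) \<le> ereal (T - p (x n))" by (cases "f (x n)") auto
      also have "\<dots> \<le> ereal (T - p l + \<delta>)" using pn by simp
      finally show "x n \<in> {u. f u \<le> ereal (T - p l + \<delta>)}" by simp
    qed
    have "l \<in> {u. f u \<le> ereal (T - p l + \<delta>)}"
      by (rule Lim_in_closed_set[OF _ ev _ xl]) (use lsc in \<open>simp_all add: lsc_fun_def\<close>)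
    then show ?thesis by simp
  qed
  have "f l + ereal (p l) \<le> ereal T"
  proof (rule ereal_le_epsilon2)
    fix e :: real assume "e > 0"
    then show "f l + ereal (p l) \<le> ereal T + ereal e" using H[of e] by (cases "f l") auto
  qed
  then show "l \<in> {u. f u + ereal (p u) \<le> ereal T}" by simp
qed

lemma norming:
  fixes e :: "'a::real_normed_vector"
  shows "\<exists>N::'a \<Rightarrow>\<^sub>L real. norm N \<le> 1 \<and> blinfun_apply N e = norm e"
proof -
  define a where "a = (\<lambda>w. norm (e + w) - norm e)"
  have "\<exists>L. bounded_linear L \<and> (\<forall>y\<in>UNIV. L y \<le> a y) \<and> (\<forall>y. \<bar>L y\<bar> \<le> 1 * norm y)"
  proof (rule sandwich)
    show "a 0 = 0" by (simp add: a_def)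
    fix x y :: 'a and t :: real assume t: "0 \<le> t" "t \<le> 1"
    have "e + ((1 - t) *\<^sub>R x + t *\<^sub>R y) = (1 - t) *\<^sub>R (e + x) + t *\<^sub>R (e + y)"
      by (simp add: algebra_simps)
    then have "norm (e + ((1 - t) *\<^sub>R x + t *\<^sub>R y)) \<le> norm ((1 - t) *\<^sub>R (e + x)) + norm (t *\<^sub>R (e + y))"
      by (metis norm_triangle_ineq)
    also have "\<dots> = (1 - t) * norm (e + x) + t * norm (e + y)" using t by simp
    finally show "a ((1 - t) *\<^sub>R x + t *\<^sub>R y) \<le> (1 - t) * a x + t * a y"
      unfolding a_def by (simp add: algebra_simps)
  next
    fix y :: 'a
    have "norm e \<le> norm (e + y) + norm y" by (metis add_diff_cancel norm_triangle_ineq4)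
    then show "- 1 * norm y \<le> a y" by (simp add: a_def)
  qed auto
  then obtain L where L: "bounded_linear L" "\<And>y. L y \<le> a y" "\<And>y. \<bar>L y\<bar> \<le> norm y" by auto
  have "L (- e) \<le> - norm e" using L(2)[of "- e"] by (simp add: a_def)
  then have "L e \<ge> norm e" using linear_neg[OF bounded_linear.linear[OF L(1)], of e] by simp
  moreover have "L e \<le> norm e" using L(3)[of e] by simp
  ultimately have Le: "L e = norm e" by simp
  have "norm (Blinfun L) \<le> 1"
    by (rule norm_blinfun_bound) (use L bounded_linear_Blinfun_apply[OF L(1)] in auto)
  then show ?thesis using Le bounded_linear_Blinfun_apply[OF L(1)] by auto
qed

lemma ball_in:
  fixes C :: "'b::real_normed_vector set"
  assumes "0 \<in> interior C" "ereal \<rho> < edist 0 (frontier C)" "norm y \<le> \<rho>"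
  shows "y \<in> C"
proof (rule ccontr)
  assume yC: "y \<notin> C"
  have "0 \<in> C" using assms(1) interior_subset by blast
  then have "closed_segment 0 y \<inter> C \<noteq> {}" "closed_segment 0 y - C \<noteq> {}" using yC by auto
  then have "closed_segment 0 y \<inter> frontier C \<noteq> {}" by (intro connected_Int_frontier) auto
  then obtain z where z: "z \<in> closed_segment 0 y" "z \<in> frontier C" by blast
  have "norm z \<le> norm y" using segment_bound1[OF z(1)] by simp
  moreover have "infdist 0 (frontier C) \<le> norm z" using infdist_le[OF z(2), of 0] by simp
  moreover have "edist 0 (frontier C) = ereal (infdist 0 (frontier C))" using z(2) by (auto simp: edist_def)
  ultimately show False using assms(2,3) by simp
qed

lemma edist_nonneg: "edist x S \<ge> 0"
  by (simp add: edist_def infdist_nonneg)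

lemma tau_nonneg: "tau f x a d \<ge> 0"
  unfolding tau_def
  by (simp only: split: if_split) (intro conjI impI INF_greatest edist_nonneg)

lemma avg_lt1: "(a::real) < c \<Longrightarrow> (a + c) / 2 < c"
  by (simp add: field_simps)

lemma avg_lt2: "(a::real) < c \<Longrightarrow> a < (a + c) / 2"
  by (simp add: field_simps)

lemma core:
  fixes f :: "'a::banach \<Rightarrow> ereal"
  assumes f: "f \<in> Gamma0" and gP: "g \<in> Ptb f \<epsilon>" and bd: "subdiff_bd f = ereal b" and eb: "\<epsilon> < b"
  shows "Er g \<ge> ereal (b - \<epsilon>)"
proof -
  have proper: "\<And>u. f u \<noteq> -\<infinity>" and fconv: "convex_fun f" and flsc: "lsc_fun f"
    using f by (auto simp: Gamma0_def proper_fun_def)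
  obtain p x \<xi> where Sg: "Sf g \<noteq> {}" and pconv: "convex_on UNIV p" and geq: "g = (\<lambda>u. f u + ereal (p u))"
    and xS: "x \<in> Sf_eq f" and xi: "\<xi> \<ge> 0"
    and cond: "ereal \<xi> + subdiff_bd f - tau f x \<xi> \<bar>p x\<bar> \<le> ereal \<epsilon>"
    and lipx: "\<forall>u. \<bar>p u - p x\<bar> \<le> \<xi> * norm (u - x)"
    using gP unfolding Ptb_def by blast
  have fx: "f x = 0" using xS by (simp add: Sf_eq_def)
  have plip: "\<bar>p a - p b'\<bar> \<le> \<xi> * norm (a - b')" for a b'
  proof -
    have "p a - p b' \<le> \<xi> * norm (a - b')" by (rule lip_global[OF pconv lipx xi])
    moreover have "p b' - p a \<le> \<xi> * norm (b' - a)" by (rule lip_global[OF pconv lipx xi])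
    ultimately show ?thesis by (simp add: norm_minus_commute)
  qed
  have gval: "g u = f u + ereal (p u)" for u by (simp add: geq)
  have gninf: "g u \<noteq> -\<infinity>" for u using proper[of u] by (cases "f u") (auto simp: gval)
  have gconv: "g ((1 - t) *\<^sub>R a + t *\<^sub>R a') \<le> ereal ((1 - t) * A + t * A')"
    if "g a = ereal A" "g a' = ereal A'" "0 \<le> t" "t \<le> 1" for a a' A A' t
  proof -
    have fa: "f a = ereal (A - p a)" using that(1) by (cases "f a") (auto simp: gval)
    have fa': "f a' = ereal (A' - p a')" using that(2) by (cases "f a'") (auto simp: gval)
    have "f ((1 - t) *\<^sub>R a + t *\<^sub>R a') \<le> ereal ((1 - t) * (A - p a) + t * (A' - p a'))"
      by (rule convex_fun_ineq[OF fconv fa fa' that(3,4)])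
    moreover have "p ((1 - t) *\<^sub>R a + t *\<^sub>R a') \<le> (1 - t) * p a + t * p a'"
      using convex_onD[OF pconv that(3,4)] by simp
    ultimately show ?thesis unfolding gval
      by (cases "f ((1 - t) *\<^sub>R a + t *\<^sub>R a')") (auto simp: algebra_simps)
  qed
  define c where "c = b - \<epsilon>"
  have cpos: "c > 0" using eb by (simp add: c_def)
  have main: "ereal c \<le> g u0 / edist u0 (Sf g)" if gu0: "g u0 > 0" for u0
  proof -
    define D where "D = infdist u0 (Sf g)"
    have ed: "edist u0 (Sf g) = ereal D" using Sg by (simp add: edist_def D_def)
    have D0: "D \<ge> 0" by (simp add: D_def infdist_nonneg)
    show ?thesis
    proof (cases "g u0")
      case PInf then show ?thesis using D0 by (simp add: ed)
    next
      case MInf then show ?thesis using gninf by simp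
    next
      case (real r)
      have rpos: "r > 0" using gu0 real by simp
      show ?thesis
      proof (cases "D = 0")
        case True then show ?thesis using rpos by (simp add: ed real)
      next
        case False
        then have Dpos: "D > 0" using D0 by simp
        have "c \<le> r / D"
        proof (rule ccontr)
          assume "\<not> c \<le> r / D"
          then have rc: "r / D < c" by simp
          define lam where "lam = (r / D + c) / 2"
          have "r / D > 0" using rpos Dpos by simp
          then have lampos: "lam > 0" using cpos unfolding lam_def by simp
          have lamc: "lam < c" using avg_lt1[OF rc] unfolding lam_def .
          have rlam: "r < lam * D"
          proof -
            have "r / D < lam" using avg_lt2[OF rc] unfolding lam_def .
            then show ?thesis using Dpos by (simp add: divide_less_eq mult.commute)
          qed
          define Dom where "Dom = {u. g u < \<infinity>}"
          define \<psi> where "\<psi> = (\<lambda>u. max (real_of_ereal (g u)) 0)"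
          have gfin: "u \<in> Dom \<Longrightarrow> g u = ereal (real_of_ereal (g u))" for u
            using gninf[of u] by (cases "g u") (auto simp: Dom_def)
          have lsc: "closed {u \<in> Dom. \<psi> u \<le> T}" for T
          proof (cases "T < 0")
            case True
            then have "{u \<in> Dom. \<psi> u \<le> T} = {}" by (auto simp: \<psi>_def)
            then show ?thesis by (metis closed_empty)
          next
            case False
            have "{u \<in> Dom. \<psi> u \<le> T} = {u. f u + ereal (p u) \<le> ereal T}"
            proof safe
              fix u assume "u \<in> Dom" "\<psi> u \<le> T"
              then show "f u + ereal (p u) \<le> ereal T"
                using gfin[of u] unfolding \<psi>_def gval[symmetric]
                by (metis ereal_less_eq(3) max.bounded_iff)
            next
              fix u assume "f u + ereal (p u) \<le> ereal T"
              then have gu: "g u \<le> ereal T" by (simp add: gval)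
              then show "u \<in> Dom" by (auto simp: Dom_def)
              show "\<psi> u \<le> T" using gu False gninf[of u] unfolding \<psi>_def
                by (cases "g u") auto
            qed
            then show ?thesis using lsc_sum[OF flsc plip xi] by simp
          qed
          have nn: "u \<in> Dom \<Longrightarrow> \<psi> u \<ge> 0" for u by (simp add: \<psi>_def)
          have u0D: "u0 \<in> Dom" using real by (simp add: Dom_def)
          have psiu0: "\<psi> u0 = r" using real rpos by (simp add: \<psi>_def)
          obtain v where vD: "v \<in> Dom" and ek1: "\<psi> v + lam * norm (v - u0) \<le> \<psi> u0"
            and ek2: "\<forall>u\<in>Dom. \<psi> v \<le> \<psi> u + lam * norm (u - v)"
            using ekeland[OF lsc nn u0D lampos] by blast
          have "lam * norm (v - u0) \<le> r" using ek1 psiu0 nn[OF vD] by linarith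
          then have "lam * norm (v - u0) < lam * D" using rlam by linarith
          then have nvu: "norm (v - u0) < D" using lampos by simp
          define dv where "dv = infdist v (Sf g)"
          have "D \<le> dv + dist u0 v" unfolding D_def dv_def by (rule infdist_triangle)
          then have dvpos: "dv > 0" using nvu by (simp add: dist_norm norm_minus_commute)
          have notS: "w \<notin> Sf g" if "dist v w < dv" for w
          proof
            assume "w \<in> Sf g"
            then have "dv \<le> dist v w" unfolding dv_def by (rule infdist_le)
            then show False using that by simp
          qed
          have "v \<notin> Sf g" using notS dvpos by simp
          then have gvpos: "g v > 0" by (simp add: Sf_def not_le)
          obtain gv where gv: "g v = ereal gv" using gfin[OF vD] by blast
          have gvp: "gv > 0" using gvpos gv by simp
          have psiv: "\<psi> v = gv" using gv gvp by (simp add: \<psi>_def)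
          have claimA: "ereal (gv - lam * norm (u - v)) \<le> g u" for u
          proof (cases "g u")
            case PInf then show ?thesis by simp
          next
            case MInf then show ?thesis using gninf by simp
          next
            case (real gu)
            have uD: "u \<in> Dom" using real by (simp add: Dom_def)
            show ?thesis
            proof (cases "gu > 0")
              case True
              then have "\<psi> u = gu" using real by (simp add: \<psi>_def)
              then show ?thesis using ek2 uD psiv real by force
            next
              case False
              then have "u \<in> Sf g" using real by (simp add: Sf_def)
              then have uv: "u \<noteq> v" using \<open>v \<notin> Sf g\<close> by blast
              then have nuv: "norm (u - v) > 0" by simp
              define t where "t = min 1 (dv / (2 * norm (u - v)))"
              have tpos: "t > 0" using dvpos nuv by (simp add: t_def)
              have t1: "t \<le> 1" by (simp add: t_def)
              have tle: "t * norm (u - v) < dv"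
              proof -
                have "t \<le> dv / (2 * norm (u - v))" by (simp add: t_def)
                then have "t * norm (u - v) \<le> dv / 2" using nuv by (simp add: le_divide_eq field_simps)
                then show ?thesis using dvpos by simp
              qed
              define w where "w = (1 - t) *\<^sub>R v + t *\<^sub>R u"
              have wv: "w - v = t *\<^sub>R (u - v)" by (simp add: w_def algebra_simps)
              have nwv: "norm (w - v) = t * norm (u - v)" using tpos by (simp add: wv)
              have "dist v w < dv" using tle nwv by (simp add: dist_norm norm_minus_commute)
              then have "w \<notin> Sf g" by (rule notS)
              then have gwpos: "g w > 0" by (simp add: Sf_def not_le)
              have gwle: "g w \<le> ereal ((1 - t) * gv + t * gu)"
                unfolding w_def using gconv[OF gv real] tpos t1 by simp
              obtain gw where gw: "g w = ereal gw" using gwle gninf[of w] by (cases "g w") auto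
              have wD: "w \<in> Dom" using gw by (simp add: Dom_def)
              have "\<psi> w = gw" using gw gwpos by (simp add: \<psi>_def)
              then have "gv \<le> gw + lam * (t * norm (u - v))" using ek2 wD psiv nwv by force
              moreover have "gw \<le> (1 - t) * gv + t * gu" using gwle gw by simp
              ultimately have "t * gv \<le> t * (gu + lam * norm (u - v))" by (simp add: algebra_simps)
              then have "gv \<le> gu + lam * norm (u - v)" using tpos by simp
              then show ?thesis using real by simp
            qed
          qed
          define fv where "fv = gv - p v"
          have fv: "f v = ereal fv" using gv unfolding fv_def by (cases "f v") (auto simp: gval)
          define Dm where "Dm = {w. f (v + w) < \<infinity>}"
          define F where "F = (\<lambda>w. real_of_ereal (f (v + w)) - fv)"
          have ffin: "w \<in> Dm \<Longrightarrow> f (v + w) = ereal (real_of_ereal (f (v + w)))" for w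
            using proper[of "v + w"] by (cases "f (v + w)") (auto simp: Dm_def)
          have fcv: "f (v + ((1 - t) *\<^sub>R w1 + t *\<^sub>R w2)) \<le> ereal ((1 - t) * real_of_ereal (f (v + w1)) + t * real_of_ereal (f (v + w2)))"
            if "w1 \<in> Dm" "w2 \<in> Dm" "0 \<le> t" "t \<le> 1" for w1 w2 t
          proof -
            have "v + ((1 - t) *\<^sub>R w1 + t *\<^sub>R w2) = (1 - t) *\<^sub>R (v + w1) + t *\<^sub>R (v + w2)"
              by (simp add: algebra_simps)
            then show ?thesis using convex_fun_ineq[OF fconv ffin[OF that(1)] ffin[OF that(2)] that(3,4)]
              by simp
          qed
          have "\<exists>L. bounded_linear L \<and> (\<forall>y\<in>Dm. L y \<le> F y) \<and> (\<forall>y. \<bar>L y\<bar> \<le> (lam + \<xi>) * norm y)"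
          proof (rule sandwich)
            show "convex Dm"
            proof (rule convexI)
              fix w1 w2 and s1 s2 :: real assume h: "w1 \<in> Dm" "w2 \<in> Dm" "0 \<le> s1" "0 \<le> s2" "s1 + s2 = 1"
              then have "s1 = 1 - s2" by simp
              then have e: "s1 *\<^sub>R w1 + s2 *\<^sub>R w2 = (1 - s2) *\<^sub>R w1 + s2 *\<^sub>R w2" by simp
              have "s2 \<le> 1" using h by simp
              then have "f (v + ((1 - s2) *\<^sub>R w1 + s2 *\<^sub>R w2)) \<le> ereal ((1 - s2) * real_of_ereal (f (v + w1)) + s2 * real_of_ereal (f (v + w2)))"
                by (rule fcv[OF h(1,2) h(4)])
              then have "f (v + ((1 - s2) *\<^sub>R w1 + s2 *\<^sub>R w2)) < \<infinity>"
                by (rule le_less_trans) simp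
              then have "f (v + (s1 *\<^sub>R w1 + s2 *\<^sub>R w2)) < \<infinity>" unfolding e .
              then show "s1 *\<^sub>R w1 + s2 *\<^sub>R w2 \<in> Dm" by (simp add: Dm_def)
            qed
            show "0 \<in> Dm" using fv by (simp add: Dm_def)
            show "F 0 = 0" using fv by (simp add: F_def)
            show "F ((1 - t) *\<^sub>R w1 + t *\<^sub>R w2) \<le> (1 - t) * F w1 + t * F w2"
              if "w1 \<in> Dm" "w2 \<in> Dm" "0 \<le> t" "t \<le> 1" for w1 w2 t
            proof -
              have "f (v + ((1 - t) *\<^sub>R w1 + t *\<^sub>R w2)) < \<infinity>"
                using fcv[OF that] by (auto intro: le_less_trans)
              then have "real_of_ereal (f (v + ((1 - t) *\<^sub>R w1 + t *\<^sub>R w2))) \<le> (1 - t) * real_of_ereal (f (v + w1)) + t * real_of_ereal (f (v + w2))"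
                using fcv[OF that] proper[of "v + ((1 - t) *\<^sub>R w1 + t *\<^sub>R w2)"]
                by (cases "f (v + ((1 - t) *\<^sub>R w1 + t *\<^sub>R w2))") auto
              then show ?thesis unfolding F_def by (simp add: algebra_simps)
            qed
            show "- (lam + \<xi>) * norm w \<le> F w" if "w \<in> Dm" for w
            proof -
              have "ereal (gv - lam * norm ((v + w) - v)) \<le> g (v + w)" by (rule claimA)
              then have "gv - lam * norm w \<le> real_of_ereal (f (v + w)) + p (v + w)"
                using ffin[OF that] unfolding gval by (metis add.commute add_diff_cancel_left' ereal_less_eq(3) plus_ereal.simps(1))
              moreover have "p (v + w) - p v \<le> \<xi> * norm w" using plip[of "v + w" v] by simp
              ultimately show ?thesis unfolding F_def fv_def by (simp add: algebra_simps)
            qed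
            show "lam + \<xi> \<ge> 0" using lampos xi by simp
          qed
          then obtain L where L: "bounded_linear L" "\<And>y. y \<in> Dm \<Longrightarrow> L y \<le> F y"
            "\<And>y. \<bar>L y\<bar> \<le> (lam + \<xi>) * norm y" by blast
          define Lb where "Lb = Blinfun L"
          have Lba: "blinfun_apply Lb = L" unfolding Lb_def by (rule bounded_linear_Blinfun_apply[OF L(1)])
          have nLb: "norm Lb \<le> lam + \<xi>"
            by (rule norm_blinfun_bound) (use L(3) lampos xi Lba in auto)
          have Lbsub: "Lb \<in> subdiff f v"
            unfolding subdiff_def
          proof (intro CollectI conjI allI)
            show "\<bar>f v\<bar> \<noteq> \<infinity>" using fv by simp
            fix u
            show "ereal (blinfun_apply Lb (u - v)) \<le> f u - f v"
            proof (cases "f u")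
              case PInf then show ?thesis using fv by simp
            next
              case MInf then show ?thesis using proper by simp
            next
              case (real fu)
              have "u - v \<in> Dm" using real by (simp add: Dm_def)
              then have "L (u - v) \<le> F (u - v)" by (rule L(2))
              then show ?thesis using real fv by (simp add: Lba F_def)
            qed
          qed
          have claimC: "tau f x \<xi> \<bar>p x\<bar> \<le> ereal (\<xi> + lam)"
          proof (cases "0 \<in> interior (subdiff f x)")
            case False
            then have teq: "tau f x \<xi> \<bar>p x\<bar> = (INF u\<in>{u. f u \<ge> ereal (- \<xi> * norm (u - x) - \<bar>p x\<bar>)}. edist 0 (subdiff f u))"
              by (simp add: tau_def)
            have vin: "f v \<ge> ereal (- \<xi> * norm (v - x) - \<bar>p x\<bar>)"
            proof -
              have "p v - p x \<le> \<xi> * norm (v - x)" using plip[of v x] by simp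
              then have "- \<xi> * norm (v - x) - \<bar>p x\<bar> \<le> fv" using gvp unfolding fv_def by linarith
              then show ?thesis using fv by simp
            qed
            have "edist 0 (subdiff f v) \<le> ereal (\<xi> + lam)"
            proof -
              have "infdist 0 (subdiff f v) \<le> dist 0 Lb" by (rule infdist_le[OF Lbsub])
              then have "infdist 0 (subdiff f v) \<le> \<xi> + lam" using nLb by simp
              then show ?thesis using Lbsub by (auto simp: edist_def)
            qed
            then show ?thesis unfolding teq using vin by (meson INF_lower2 mem_Collect_eq)
          next
            case True
            then have teq: "tau f x \<xi> \<bar>p x\<bar> = edist 0 (frontier (subdiff f x))" by (simp add: tau_def)
            show ?thesis
            proof (rule ccontr)
              assume "\<not> ?thesis"
              then have "ereal (\<xi> + lam) < edist 0 (frontier (subdiff f x))" using teq by simp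
              then obtain \<rho> where rho1: "ereal (\<xi> + lam) < ereal \<rho>" and rho2: "ereal \<rho> < edist 0 (frontier (subdiff f x))"
                using ereal_dense2 by blast
              have rho: "\<xi> + lam < \<rho>" using rho1 by simp
              have growth: "ereal (\<rho> * norm (w - x)) \<le> f w" for w
              proof -
                obtain N where N: "norm N \<le> 1" "blinfun_apply N (w - x) = norm (w - x)"
                  using norming by blast
                have "norm (\<rho> *\<^sub>R N) \<le> \<rho>" using N(1) rho lampos xi by (simp add: mult_left_le)
                then have "\<rho> *\<^sub>R N \<in> subdiff f x" by (rule ball_in[OF True rho2])
                then have "ereal (blinfun_apply (\<rho> *\<^sub>R N) (w - x)) \<le> f w - f x"
                  unfolding subdiff_def by blast
                then show ?thesis using N(2) fx by (simp add: blinfun.scaleR_left)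
              qed
              show False
              proof (cases "v = x")
                case True
                then have pxpos: "p x > 0" using gvpos fx by (simp add: gval)
                obtain w where "w \<in> Sf g" using Sg by blast
                then have gw: "f w + ereal (p w) \<le> 0" by (simp add: Sf_def gval)
                have "p x - p w \<le> \<xi> * norm (w - x)" using plip[of x w] by (simp add: norm_minus_commute)
                moreover have "\<xi> * norm (w - x) \<le> \<rho> * norm (w - x)" using rho lampos by (simp add: mult_right_mono)
                ultimately have "0 < \<rho> * norm (w - x) + p w" using pxpos by linarith
                then have "0 < ereal (\<rho> * norm (w - x)) + ereal (p w)" by simp
                also have "\<dots> \<le> f w + ereal (p w)" by (rule add_right_mono[OF growth[of w]])
                finally show False using gw by simp
              next
                case False
                have "ereal (blinfun_apply Lb (x - v)) \<le> f x - f v" using Lbsub unfolding subdiff_def by blast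
                then have "L (x - v) \<le> - fv" using fx fv by (simp add: Lba)
                moreover have "\<rho> * norm (v - x) \<le> fv" using growth[of v] fv by simp
                moreover have "L (v - x) \<le> (lam + \<xi>) * norm (v - x)" using L(3)[of "v - x"] by simp
                moreover have "L (x - v) = - L (v - x)"
                  using linear_neg[OF bounded_linear.linear[OF L(1)], of "v - x"] by simp
                ultimately have "\<rho> * norm (v - x) \<le> (lam + \<xi>) * norm (v - x)" by linarith
                moreover have "norm (v - x) > 0" using False by simp
                ultimately have "\<rho> \<le> lam + \<xi>" by simp
                then show False using rho by simp
              qed
            qed
          qed
          obtain tv where tv: "tau f x \<xi> \<bar>p x\<bar> = ereal tv"
            using claimC tau_nonneg[of f x \<xi> "\<bar>p x\<bar>"] by (cases "tau f x \<xi> \<bar>p x\<bar>") auto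
          have "\<xi> + b - tv \<le> \<epsilon>" using cond bd tv by simp
          moreover have "tv \<le> \<xi> + lam" using claimC tv by simp
          ultimately have "c \<le> lam" unfolding c_def by simp
          then show False using lamc by simp
        qed
        then show ?thesis using Dpos by (simp add: ed real)
      qed
    qed
  qed
  show ?thesis unfolding Er_def c_def[symmetric] by (rule INF_greatest) (use main in simp)
qed

lemma ineq3:
  fixes f :: "'a::banach \<Rightarrow> ereal"
  assumes f: "f \<in> Gamma0"
  shows "subdiff_bd f \<le> eps_thr (Ptb f)"
  unfolding eps_thr_def
proof (rule Inf_greatest, clarify)
  fix \<epsilon> :: real assume epos: "\<epsilon> > 0" and E0: "Er_fam (Ptb f \<epsilon>) = 0"
  have bd0: "subdiff_bd f \<ge> 0"
    unfolding subdiff_bd_def by (rule INF_greatest) (rule edist_nonneg)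
  show "subdiff_bd f \<le> ereal \<epsilon>"
  proof (rule ccontr)
    assume "\<not> ?thesis"
    then have lt: "ereal \<epsilon> < subdiff_bd f" by simp
    show False
    proof (cases "subdiff_bd f")
      case PInf
      have "Ptb f \<epsilon> = {}"
      proof (rule ccontr)
        assume "Ptb f \<epsilon> \<noteq> {}"
        then obtain g where "g \<in> Ptb f \<epsilon>" by blast
        then obtain x \<xi> p where "ereal \<xi> + subdiff_bd f - tau f x \<xi> \<bar>p x\<bar> \<le> ereal \<epsilon>"
          unfolding Ptb_def by blast
        then show False using PInf by simp
      qed
      then show False using E0 by (simp add: Er_fam_def top_ereal_def)
    next
      case (real b)
      have eb: "\<epsilon> < b" using lt real by simp
      have "ereal (b - \<epsilon>) \<le> Er_fam (Ptb f \<epsilon>)"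
        unfolding Er_fam_def by (rule INF_greatest) (rule core[OF f _ real eb])
      then show False using E0 eb by simp
    next
      case MInf then show False using bd0 by simp
    qed
  qed
qed

theorem mainTheorem8:
  fixes f :: "'a::banach \<Rightarrow> ereal"
  assumes "f \<in> Gamma0"
    and "Sf f \<noteq> {}"
  shows "eps_thr (Ptb_w f) \<le> eps_thr (Ptb_wl f) \<and> eps_thr (Ptb_wl f) \<le> subdiff_bd f \<and>
         subdiff_bd f \<le> eps_thr (Ptb f) \<and> eps_thr (Ptb f) \<le> eps_thr (Ptb_l f)"
proof -
  have 1: "eps_thr (Ptb_w f) \<le> eps_thr (Ptb_wl f)"
    by (rule eps_thr_sub[where P="Ptb_wl f" and Q="Ptb_w f"]) (rule wl_sub_w)
  have 4: "eps_thr (Ptb f) \<le> eps_thr (Ptb_l f)"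
    by (rule eps_thr_sub[where P="Ptb_l f" and Q="Ptb f"]) (rule l_sub)
  show ?thesis using 1 4 ineq2[of f] ineq3[OF assms(1)] by blast
qed

end
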